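(* Let $\mathfrak p$ be a standard parabolic subalgebra of $\mathfrak g$ and $j\in\{1,\dots,n\}$. Then $w_j\in W^{\mathfrak p}$ if and only if $\alpha_j\notin\Sigma_{\mathfrak p}$. Moreover, for every $v\in W_+^{\mathfrak p}$ and every $w\in W^{\mathfrak p}$ we have $vw\in W^{\mathfrak p}$.
   Context: Let $\mathfrak g=\mathfrak{sl}_{n+1}(\mathbb C)$, $n\ge1$, $\Delta_+=\{\varepsilon_i-\varepsilon_j:i<j\}$, $\Delta_-=-\Delta_+$, $\Pi=\{\alpha_1,\dots,\alpha_n\}$, $\alpha_i=\varepsilon_i-\varepsilon_{i+1}$, $\theta=\alpha_1+\dots+\alpha_n$; $W$ the Weyl group generated by the simple reflections $s_i$. For $\Sigma\subset\Pi$, $\Delta_\Sigma$ is the root subsystem generated by $\Sigma$, $\mathfrak p_\Sigma$ the standard parabolic subalgebra, $\Sigma_{\mathfrak p_\Sigma}=\Sigma$, and $W^{\mathfrak p_\Sigma}=\{w\in W:\Delta_+\cap w(\Delta_-)\subset\Delta_+\setminus\Delta_\Sigma\}$. For $j=1,\dots,n$, $w_j\in W$ is the unique element preserving the set $\{\alpha_1,\dots,\alpha_n,-\theta\}$ with $w_j(-\theta)=\alpha_j$ (equivalently $w_j=(s_1s_2\cdots s_n)^j$); $W_+=\{e,w_1,\dots,w_n\}$ and $W_+^{\mathfrak p_\Sigma}=\{w\in W_+:w(\Sigma)=\Sigma\}$. *)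

theory Defs
  imports "HOL-Combinatorics.Combinatorics" "HOL-Library.Function_Algebras"
begin

text \<open>Type A_n: g = sl_(n+1).  Weights are integer vectors indexed by 1..n+1
  (functions nat => int); eps i is the i-th standard basis vector.\<close>

definition eps :: "nat \<Rightarrow> nat \<Rightarrow> int" where
  "eps i = (\<lambda>k. if k = i then 1 else 0)"

definition roots :: "nat \<Rightarrow> (nat \<Rightarrow> int) set" where
  "roots n = {eps i - eps j | i j. i \<in> {1..n+1} \<and> j \<in> {1..n+1} \<and> i \<noteq> j}"

definition pos_roots :: "nat \<Rightarrow> (nat \<Rightarrow> int) set" where
  "pos_roots n = {eps i - eps j | i j. i \<in> {1..n+1} \<and> j \<in> {1..n+1} \<and> i < j}"

definition neg_roots :: "nat \<Rightarrow> (nat \<Rightarrow> int) set" where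
  "neg_roots n = uminus ` pos_roots n"

definition alpha :: "nat \<Rightarrow> nat \<Rightarrow> int" where
  "alpha i = eps i - eps (Suc i)"

definition simple_roots :: "nat \<Rightarrow> (nat \<Rightarrow> int) set" where
  "simple_roots n = alpha ` {1..n}"

definition theta :: "nat \<Rightarrow> nat \<Rightarrow> int" where
  "theta n = eps 1 - eps (n+1)"

definition root_subsystem :: "nat \<Rightarrow> (nat \<Rightarrow> int) set \<Rightarrow> (nat \<Rightarrow> int) set" where
  "root_subsystem n \<Sigma> =
     {\<beta> \<in> roots n. \<exists>c :: (nat \<Rightarrow> int) \<Rightarrow> int. \<beta> = (\<Sum>a\<in>\<Sigma>. (\<lambda>k. c a * a k))}"

text \<open>Weyl group: the symmetric group on {1..n+1}, acting by w(eps i) = eps (w i).\<close>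
definition weyl :: "nat \<Rightarrow> (nat \<Rightarrow> nat) set" where
  "weyl n = {w. w permutes {1..n+1}}"

definition act :: "(nat \<Rightarrow> nat) \<Rightarrow> (nat \<Rightarrow> int) \<Rightarrow> (nat \<Rightarrow> int)" where
  "act w \<beta> = (\<lambda>k. \<beta> (inv w k))"

definition sref :: "nat \<Rightarrow> nat \<Rightarrow> nat" where
  "sref i = transpose i (Suc i)"

definition wJ :: "nat \<Rightarrow> nat \<Rightarrow> nat \<Rightarrow> nat" where
  "wJ n j = (foldr (\<circ>) (map sref [1..<n+1]) id) ^^ j"

definition Wplus :: "nat \<Rightarrow> (nat \<Rightarrow> nat) set" where
  "Wplus n = insert id (wJ n ` {1..n})"

definition Wpar :: "nat \<Rightarrow> (nat \<Rightarrow> int) set \<Rightarrow> (nat \<Rightarrow> nat) set" where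
  "Wpar n \<Sigma> = {w \<in> weyl n.
      pos_roots n \<inter> act w ` neg_roots n \<subseteq> pos_roots n - root_subsystem n \<Sigma>}"

definition Wplus_par :: "nat \<Rightarrow> (nat \<Rightarrow> int) set \<Rightarrow> (nat \<Rightarrow> nat) set" where
  "Wplus_par n \<Sigma> = {w \<in> Wplus n. act w ` \<Sigma> = \<Sigma>}"

end

theory Submission imports Defs begin

lemma sum_app: "(\<Sum>x\<in>S. (f x :: nat \<Rightarrow> int)) k = (\<Sum>x\<in>S. f x k)"
  by (induction S rule: infinite_finite_induct) auto

lemma foldr_comp: "foldr (\<circ>) xs g = foldr (\<circ>) xs id \<circ> g"
  by (induction xs) auto

lemma cyc_step: "foldr (\<circ>) (map sref [1..<Suc m+1]) id = foldr (\<circ>) (map sref [1..<m+1]) id \<circ> sref (m+1)"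
proof -
  have "[1..<Suc m+1] = [1..<m+1] @ [m+1]" by simp
  then show ?thesis by (simp only: map_append foldr_append) (simp add: foldr_comp[of _ "sref _"])
qed

definition cyc :: "nat \<Rightarrow> nat \<Rightarrow> nat" where
  "cyc n = foldr (\<circ>) (map sref [1..<n+1]) id"

lemma cyc_val: "cyc n k = (if 1 \<le> k \<and> k \<le> n then k+1 else if k = n+1 then 1 else k)"
proof (induction n arbitrary: k)
  case 0 then show ?case by (simp add: cyc_def)
next
  case (Suc n)
  have "cyc (Suc n) = cyc n \<circ> sref (n+1)"
    by (simp only: cyc_def cyc_step)
  then show ?case using Suc by (auto simp: sref_def transpose_def)
qed

lemma wJ_cyc: "wJ n j = cyc n ^^ j" by (simp add: wJ_def cyc_def)

lemma cyc_permutes: "cyc n permutes {1..n+1}"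
proof -
  have "\<forall>m. m \<le> n \<longrightarrow> foldr (\<circ>) (map sref [1..<m+1]) id permutes {1..n+1}"
  proof
    fix m show "m \<le> n \<longrightarrow> foldr (\<circ>) (map sref [1..<m+1]) id permutes {1..n+1}"
    proof (induction m)
      case 0 then show ?case by (simp add: permutes_def)
    next
      case (Suc m)
      show ?case
      proof
        assume "Suc m \<le> n"
        then have "foldr (\<circ>) (map sref [1..<m+1]) id permutes {1..n+1}" using Suc.IH by (meson Suc_leD)
        moreover have "sref (m+1) permutes {1..n+1}" using \<open>Suc m \<le> n\<close>
          unfolding sref_def by (intro permutes_swap_id) auto
        ultimately show "foldr (\<circ>) (map sref [1..<Suc m+1]) id permutes {1..n+1}"
          unfolding cyc_step by (blast intro: permutes_compose)
      qed
    qed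
  qed
  then show ?thesis by (simp add: cyc_def)
qed

lemma cycpow_val:
  assumes "j \<le> n+1" "k \<in> {1..n+1}"
  shows "(cyc n ^^ j) k = (if k + j \<le> n+1 then k+j else k+j-(n+1))"
  using assms(1)
proof (induction j)
  case 0 then show ?case using assms(2) by simp
next
  case (Suc j)
  then show ?case using assms(2) by (auto simp: cyc_val)
qed

lemma eps_diff_eq:
  assumes "a \<noteq> b" "eps a - eps b = eps c - eps d"
  shows "a = c \<and> b = d"
proof -
  have "(eps a - eps b) a = (eps c - eps d) a" "(eps a - eps b) b = (eps c - eps d) b"
    using assms(2) by simp_all
  then have 1: "eps a a - eps b a = eps c a - eps d a" "eps a b - eps b b = eps c b - eps d b"
    by simp_all
  have "a = c" using 1(1) assms(1) unfolding eps_def by (cases "a = c"; cases "a = d") simp_all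
  moreover have "b = d" using 1(2) assms(1) unfolding eps_def by (cases "b = c"; cases "b = d") simp_all
  ultimately show ?thesis by simp
qed

lemma act_eps: assumes "bij w" shows "act w (eps i) = eps (w i)"
proof -
  have "\<And>k. (inv w k = i) = (k = w i)" using bij_inv_eq_iff[OF assms, of i] by metis
  then show ?thesis unfolding act_def eps_def by (simp add: fun_eq_iff)
qed

lemma act_diff: "act w (f - g) = act w f - act w g"
  unfolding act_def by auto

lemma act_neg: "act w (- f) = - act w f"
  unfolding act_def by auto

lemma act_inj: assumes "bij w" "act w f = act w g" shows "f = g"
proof
  fix k
  have "f (inv w (w k)) = g (inv w (w k))" using assms(2) unfolding act_def by (rule fun_cong)
  moreover have "inv w (w k) = k" using assms(1) by (simp add: bij_def)
  ultimately show "f k = g k" by simp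
qed

lemma Wpar_iff:
  assumes w: "w permutes {1..n+1}"
  shows "w \<in> Wpar n \<Sigma> \<longleftrightarrow> (\<forall>x\<in>{1..n+1}. \<forall>y\<in>{1..n+1}. w x < w y \<longrightarrow>
            eps (w x) - eps (w y) \<in> root_subsystem n \<Sigma> \<longrightarrow> x < y)"
proof -
  have bw: "bij w" using w by (rule permutes_bij)
  have wr: "\<And>x. x \<in> {1..n+1} \<Longrightarrow> w x \<in> {1..n+1}" using w by (metis permutes_in_image)
  show ?thesis
  proof
    assume A: "w \<in> Wpar n \<Sigma>"
    show "\<forall>x\<in>{1..n+1}. \<forall>y\<in>{1..n+1}. w x < w y \<longrightarrow>
            eps (w x) - eps (w y) \<in> root_subsystem n \<Sigma> \<longrightarrow> x < y"
    proof (intro ballI impI)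
      fix x y assume x: "x \<in> {1..n+1}" and y: "y \<in> {1..n+1}" and lt: "w x < w y"
        and R: "eps (w x) - eps (w y) \<in> root_subsystem n \<Sigma>"
      show "x < y"
      proof (rule ccontr)
        assume "\<not> x < y"
        moreover have "x \<noteq> y" using lt by auto
        ultimately have yx: "y < x" by simp
        have P: "eps (w x) - eps (w y) \<in> pos_roots n"
          unfolding pos_roots_def using wr[OF x] wr[OF y] lt by blast
        have N: "- (eps y - eps x) \<in> neg_roots n"
          unfolding neg_roots_def pos_roots_def using x y yx by blast
        have "act w (- (eps y - eps x)) = eps (w x) - eps (w y)"
          by (simp add: act_neg act_diff act_eps[OF bw])
        with N have "eps (w x) - eps (w y) \<in> act w ` neg_roots n" by (metis image_eqI)
        with P A R show False unfolding Wpar_def by blast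
      qed
    qed
  next
    assume B: "\<forall>x\<in>{1..n+1}. \<forall>y\<in>{1..n+1}. w x < w y \<longrightarrow>
            eps (w x) - eps (w y) \<in> root_subsystem n \<Sigma> \<longrightarrow> x < y"
    have "pos_roots n \<inter> act w ` neg_roots n \<subseteq> pos_roots n - root_subsystem n \<Sigma>"
    proof
      fix \<beta> assume "\<beta> \<in> pos_roots n \<inter> act w ` neg_roots n"
      then obtain a b a' b' where ab: "\<beta> = eps a - eps b" "a \<in> {1..n+1}" "b \<in> {1..n+1}" "a < b"
        and ab': "\<beta> = act w (- (eps a' - eps b'))" "a' \<in> {1..n+1}" "b' \<in> {1..n+1}" "a' < b'"
        unfolding pos_roots_def neg_roots_def by blast
      have "\<beta> = eps (w b') - eps (w a')" using ab'(1)
        by (simp add: act_neg act_diff act_eps[OF bw])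
      with ab have e: "a = w b'" "b = w a'" using eps_diff_eq[of a b "w b'" "w a'"] by auto
      show "\<beta> \<in> pos_roots n - root_subsystem n \<Sigma>"
      proof
        show "\<beta> \<in> pos_roots n" using ab unfolding pos_roots_def by blast
        show "\<beta> \<notin> root_subsystem n \<Sigma>"
        proof
          assume "\<beta> \<in> root_subsystem n \<Sigma>"
          then have "b' < a'" using B ab' ab e by auto
          then show False using ab' by simp
        qed
      qed
    qed
    then show "w \<in> Wpar n \<Sigma>" unfolding Wpar_def weyl_def using w by blast
  qed
qed

lemma sum_eps: "(\<Sum>k\<le>j. eps i k) = (if i \<le> j then 1 else 0)"
  unfolding eps_def by simp

lemma finite_Sigma: "\<Sigma> \<subseteq> simple_roots n \<Longrightarrow> finite \<Sigma>"
  unfolding simple_roots_def by (meson finite_atLeastAtMost finite_imageI finite_subset)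

lemma phi_zero:
  assumes "\<Sigma> \<subseteq> simple_roots n" "alpha j \<notin> \<Sigma>" "\<beta> \<in> root_subsystem n \<Sigma>"
  shows "(\<Sum>k\<le>j. \<beta> k) = 0"
proof -
  obtain c where c: "\<beta> = (\<Sum>a\<in>\<Sigma>. (\<lambda>k. c a * a k))"
    using assms(3) unfolding root_subsystem_def by blast
  have "(\<Sum>k\<le>j. \<beta> k) = (\<Sum>k\<le>j. \<Sum>a\<in>\<Sigma>. c a * a k)"
    unfolding c sum_app by simp
  also have "\<dots> = (\<Sum>a\<in>\<Sigma>. c a * (\<Sum>k\<le>j. a k))"
    by (simp add: sum.swap[of _ _ \<Sigma>] sum_distrib_left)
  also have "\<dots> = 0"
  proof (rule sum.neutral, rule ballI)
    fix a assume "a \<in> \<Sigma>"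
    then obtain i where i: "a = alpha i" "i \<noteq> j"
      using assms(1,2) unfolding simple_roots_def by auto
    have "(\<Sum>k\<le>j. a k) = (\<Sum>k\<le>j. eps i k) - (\<Sum>k\<le>j. eps (Suc i) k)"
      unfolding i alpha_def by (simp add: sum_subtractf)
    also have "\<dots> = 0" using i(2) unfolding sum_eps by auto
    finally show "c a * (\<Sum>k\<le>j. a k) = 0" by simp
  qed
  finally show ?thesis .
qed

lemma phi_cor:
  assumes "\<Sigma> \<subseteq> simple_roots n" "alpha j \<notin> \<Sigma>" "eps a - eps b \<in> root_subsystem n \<Sigma>"
  shows "\<not> (a \<le> j \<and> j < b)"
proof -
  have "(\<Sum>k\<le>j. (eps a - eps b) k) = 0" by (rule phi_zero[OF assms])
  then have "(\<Sum>k\<le>j. eps a k) - (\<Sum>k\<le>j. eps b k) = 0" by (simp add: sum_subtractf)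
  then show ?thesis unfolding sum_eps by (auto split: if_splits)
qed

lemma alpha_RS:
  assumes "\<Sigma> \<subseteq> simple_roots n" "alpha j \<in> \<Sigma>" "j \<in> {1..n}"
  shows "alpha j \<in> root_subsystem n \<Sigma>"
proof -
  have fin: "finite \<Sigma>" using assms(1) by (rule finite_Sigma)
  have r: "alpha j \<in> roots n" unfolding roots_def alpha_def using assms(3) by force
  have "(\<Sum>a\<in>\<Sigma>. (\<lambda>k. (\<lambda>x. if x = alpha j then 1 else 0) a * a k)) = alpha j"
  proof
    fix k
    show "(\<Sum>a\<in>\<Sigma>. (\<lambda>k. (\<lambda>x. if x = alpha j then 1 else 0) a * a k)) k = alpha j k"
    proof -
      have "(\<Sum>a\<in>\<Sigma>. (\<lambda>k. (\<lambda>x. if x = alpha j then 1 else 0) a * a k)) k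
           = (\<Sum>x\<in>\<Sigma>. (if x = alpha j then 1 else 0) * x k)" by (simp only: sum_app)
      also have "\<dots> = (\<Sum>x\<in>\<Sigma>. if x = alpha j then alpha j k else 0)" by (rule sum.cong) auto
      also have "\<dots> = alpha j k" using fin assms(2) by simp
      finally show ?thesis .
    qed
  qed
  then show ?thesis using r unfolding root_subsystem_def
    by (intro CollectI conjI exI[of _ "\<lambda>x. if x = alpha j then 1 else 0"]) simp_all
qed

lemma RS_pullback:
  assumes v: "v permutes {1..n+1}" and inv: "act v ` \<Sigma> = \<Sigma>" and fin: "finite \<Sigma>"
    and a: "a \<in> {1..n+1}" and b: "b \<in> {1..n+1}" and ab: "a \<noteq> b"
    and R: "eps (v a) - eps (v b) \<in> root_subsystem n \<Sigma>"
  shows "eps a - eps b \<in> root_subsystem n \<Sigma>"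
proof -
  have bv: "bij v" using v by (rule permutes_bij)
  obtain c where c: "eps (v a) - eps (v b) = (\<Sum>x\<in>\<Sigma>. (\<lambda>k. c x * x k))"
    using R unfolding root_subsystem_def by blast
  have injS: "inj_on (act v) \<Sigma>" using act_inj[OF bv] by (meson inj_onI)
  have "(\<Sum>x\<in>\<Sigma>. (\<lambda>k. c x * x k)) = (\<Sum>y\<in>act v ` \<Sigma>. (\<lambda>k. c y * y k))"
    by (simp only: inv)
  also have "\<dots> = (\<Sum>y\<in>\<Sigma>. (\<lambda>k. c (act v y) * act v y k))"
    by (simp only: sum.reindex[OF injS] o_def)
  also have "\<dots> = act v (\<Sum>y\<in>\<Sigma>. (\<lambda>k. c (act v y) * y k))"
    unfolding act_def by (rule ext) (simp only: sum_app)
  finally have "act v (eps a - eps b) = act v (\<Sum>y\<in>\<Sigma>. (\<lambda>k. c (act v y) * y k))"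
    using c by (simp only: act_diff act_eps[OF bv])
  then have e: "eps a - eps b = (\<Sum>y\<in>\<Sigma>. (\<lambda>k. c (act v y) * y k))" by (rule act_inj[OF bv])
  have "eps a - eps b \<in> roots n" unfolding roots_def using a b ab by blast
  with e show ?thesis unfolding root_subsystem_def
    by (intro CollectI conjI exI[of _ "\<lambda>y. c (act v y)"]) simp_all
qed

lemma cyc_mono:
  assumes "1 \<le> j" "j \<le> n" "a \<in> {1..n+1}" "b \<in> {1..n+1}"
    "(cyc n ^^ j) a < (cyc n ^^ j) b" "\<not> ((cyc n ^^ j) a \<le> j \<and> j < (cyc n ^^ j) b)"
  shows "a < b"
proof -
  have j: "j \<le> n+1" using assms(2) by simp
  note va = cycpow_val[OF j assms(3)] and vb = cycpow_val[OF j assms(4)]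
  show ?thesis
  proof (cases "a + j \<le> n+1"; cases "b + j \<le> n+1")
  qed (use assms(3-6) va vb in \<open>simp_all\<close>)
qed


lemma simple_alpha: "\<Sigma> \<subseteq> simple_roots n \<Longrightarrow> x \<in> \<Sigma> \<Longrightarrow> \<exists>i\<in>{1..n}. x = alpha i"
  unfolding simple_roots_def by auto

theorem mainTheorem9:
  fixes n :: nat and \<Sigma> :: "(nat \<Rightarrow> int) set"
  assumes "n \<ge> 1" and "\<Sigma> \<subseteq> simple_roots n"
  shows "(\<forall>j\<in>{1..n}. wJ n j \<in> Wpar n \<Sigma> \<longleftrightarrow> alpha j \<notin> \<Sigma>)
       \<and> (\<forall>v\<in>Wplus_par n \<Sigma>. \<forall>w\<in>Wpar n \<Sigma>. v \<circ> w \<in> Wpar n \<Sigma>)"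
proof
  have permJ: "wJ n j permutes {1..n+1}" for j
    unfolding wJ_cyc by (rule permutes_funpow[OF cyc_permutes])
  show "\<forall>j\<in>{1..n}. wJ n j \<in> Wpar n \<Sigma> \<longleftrightarrow> alpha j \<notin> \<Sigma>"
  proof
    fix j assume j: "j \<in> {1..n}"
    have jl: "j \<le> n+1" using j by simp
    show "wJ n j \<in> Wpar n \<Sigma> \<longleftrightarrow> alpha j \<notin> \<Sigma>"
    proof
      assume W: "wJ n j \<in> Wpar n \<Sigma>"
      show "alpha j \<notin> \<Sigma>"
      proof
        assume aj: "alpha j \<in> \<Sigma>"
        have 1: "wJ n j (n+1) = j" unfolding wJ_cyc using cycpow_val[OF jl, of "n+1"] j by simp
        have 2: "wJ n j 1 = j+1" unfolding wJ_cyc using cycpow_val[OF jl, of 1] j by simp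
        have "eps (wJ n j (n+1)) - eps (wJ n j 1) \<in> root_subsystem n \<Sigma>"
          unfolding 1 2 using alpha_RS[OF assms(2) aj j] by (simp add: alpha_def)
        moreover have "wJ n j (n+1) < wJ n j 1" unfolding 1 2 by simp
        moreover have A: "\<forall>x\<in>{1..n+1}. \<forall>y\<in>{1..n+1}. wJ n j x < wJ n j y \<longrightarrow>
            eps (wJ n j x) - eps (wJ n j y) \<in> root_subsystem n \<Sigma> \<longrightarrow> x < y"
          using W Wpar_iff[OF permJ[of j]] by blast
        moreover have "n+1 \<in> {1..n+1}" "(1::nat) \<in> {1..n+1}" by auto
        ultimately have "n + 1 < (1::nat)" by blast
        then show False by simp
      qed
    next
      assume na: "alpha j \<notin> \<Sigma>"
      show "wJ n j \<in> Wpar n \<Sigma>"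
        unfolding Wpar_iff[OF permJ[of j]]
      proof (intro ballI impI)
        fix x y assume x: "x \<in> {1..n+1}" and y: "y \<in> {1..n+1}"
          and lt: "wJ n j x < wJ n j y" and R: "eps (wJ n j x) - eps (wJ n j y) \<in> root_subsystem n \<Sigma>"
        have "\<not> (wJ n j x \<le> j \<and> j < wJ n j y)" by (rule phi_cor[OF assms(2) na R])
        then show "x < y" using cyc_mono[of j n x y] j x y lt unfolding wJ_cyc by auto
      qed
    qed
  qed
  show "\<forall>v\<in>Wplus_par n \<Sigma>. \<forall>w\<in>Wpar n \<Sigma>. v \<circ> w \<in> Wpar n \<Sigma>"
  proof (intro ballI)
    fix v w assume v: "v \<in> Wplus_par n \<Sigma>" and w: "w \<in> Wpar n \<Sigma>"
    have pw: "w permutes {1..n+1}" using w unfolding Wpar_def weyl_def by blast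
    have vi: "act v ` \<Sigma> = \<Sigma>" using v unfolding Wplus_par_def by blast
    from v have "v = id \<or> (\<exists>j\<in>{1..n}. v = wJ n j)" unfolding Wplus_par_def Wplus_def by blast
    then show "v \<circ> w \<in> Wpar n \<Sigma>"
    proof
      assume "v = id" then show ?thesis using w by simp
    next
      assume "\<exists>j\<in>{1..n}. v = wJ n j"
      then obtain j where j: "j \<in> {1..n}" and vj: "v = wJ n j" by blast
      have jl: "j \<le> n+1" using j by simp
      have pv: "v permutes {1..n+1}" using vj permJ by simp
      have bv: "bij v" using pv by (rule permutes_bij)
      have na: "alpha j \<notin> \<Sigma>"
      proof
        assume aj: "alpha j \<in> \<Sigma>"
        then obtain \<gamma> where g: "\<gamma> \<in> \<Sigma>" "alpha j = act v \<gamma>" using vi by (metis imageE)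
        then obtain i where i: "i \<in> {1..n}" "\<gamma> = alpha i" using simple_alpha[OF assms(2)] by blast
        have "eps j - eps (Suc j) = eps (v i) - eps (v (Suc i))"
          using g(2) unfolding i(2) alpha_def by (simp add: act_diff act_eps[OF bv])
        then have "j = v i" using eps_diff_eq[of j "Suc j" "v i" "v (Suc i)"] by simp
        moreover have "v i = (if i + j \<le> n+1 then i+j else i+j-(n+1))"
          unfolding vj wJ_cyc using cycpow_val[OF jl, of i] i by simp
        ultimately show False using i j by (auto split: if_splits)
      qed
      show ?thesis
        unfolding Wpar_iff[OF permutes_compose[OF pw pv]]
      proof (intro ballI impI)
        fix x y assume x: "x \<in> {1..n+1}" and y: "y \<in> {1..n+1}"
          and lt: "(v \<circ> w) x < (v \<circ> w) y" and R: "eps ((v \<circ> w) x) - eps ((v \<circ> w) y) \<in> root_subsystem n \<Sigma>"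
        have wx: "w x \<in> {1..n+1}" and wy: "w y \<in> {1..n+1}"
          using pw x y by (metis permutes_in_image)+
        have "\<not> (v (w x) \<le> j \<and> j < v (w y))" using phi_cor[OF assms(2) na] R by simp
        then have wl: "w x < w y" using cyc_mono[of j n "w x" "w y"] j wx wy lt unfolding vj wJ_cyc by auto
        have "eps (w x) - eps (w y) \<in> root_subsystem n \<Sigma>"
          by (rule RS_pullback[OF pv vi finite_Sigma[OF assms(2)] wx wy]) (use wl R in auto)
        then show "x < y" using w wl x y unfolding Wpar_iff[OF pw] by blast
      qed
    qed
  qed
qed

end
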